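(* Let $F\colon\mathbf{A}\to\mathbf{B}$ be a lens, and let $\bar J_1,\bar J_2\colon\mathbf{B}\to\mathbf{C}$ be the cokernel pair of the get functor $UF$ in $\mathbf{Cat}$ (i.e. the two injections of the pushout of $UF$ along itself). Then $\bar J_1$ and $\bar J_2$ are cosieves, and the unique lenses $J_1$ and $J_2$ whose get functors are $\bar J_1$ and $\bar J_2$ satisfy $J_1\circ F=J_2\circ F$ in $\mathbf{Lens}$.
   Context: A lens $F\colon \mathbf{A}\to\mathbf{B}$ between small categories consists of a functor $F\colon\mathbf{A}\to\mathbf{B}$ (the get functor) together with, for each object $A$ of $\mathbf{A}$, a function $\varphi_{F,A}$ from the set of morphisms of $\mathbf{B}$ with domain $FA$ to the set of morphisms of $\mathbf{A}$ with domain $A$, such that: $F(\varphi_{F,A}b)=b$; $\varphi_{F,A}(\mathrm{id}_{FA})=\mathrm{id}_A$; and $\varphi_{F,A}(b'\circ b)=\varphi_{F,A'}(b')\circ\varphi_{F,A}(b)$ whenever $b$ has domain $FA$, $A'$ is the codomain of $\varphi_{F,A}b$, and $b'$ has domain $FA'$. $\mathbf{Lens}$ is the category of small categories and lenses, with composite of $F\colon\mathbf{A}\to\mathbf{B}$, $G\colon\mathbf{B}\to\mathbf{C}$ having get functor $G\circ F$ and puts $\varphi_{G\circ F,A}(c)=\varphi_{F,A}(\varphi_{G,FA}(c))$. $U\colon\mathbf{Lens}\to\mathbf{Cat}$ sends a lens to its get functor. A functor $F\colon\mathbf{A}\to\mathbf{B}$ is a discrete opfibration if for each object $A$ and each morphism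 $b$ of $\mathbf{B}$ with domain $FA$ there is a unique morphism $a$ of $\mathbf{A}$ with domain $A$ and $Fa=b$; a discrete opfibration has exactly one lens structure (puts given by these unique lifts). A cosieve is an injective-on-objects discrete opfibration. *)

theory Defs
  imports Main
begin

text \<open>Small categories, represented by carrier sets of objects and morphisms
 with domain, codomain, identity and composition operations
 (composition written in applicative order: cComp C g f = g after f).\<close>

record ('o, 'a) cat =
  cObj  :: "'o set"
  cArr  :: "'a set"
  cDom  :: "'a \<Rightarrow> 'o"
  cCod  :: "'a \<Rightarrow> 'o"
  cId   :: "'o \<Rightarrow> 'a"
  cComp :: "'a \<Rightarrow> 'a \<Rightarrow> 'a"

definition is_cat :: "('o, 'a) cat \<Rightarrow> bool" where
  "is_cat C \<longleftrightarrow>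
     (\<forall>f\<in>cArr C. cDom C f \<in> cObj C \<and> cCod C f \<in> cObj C) \<and>
     (\<forall>x\<in>cObj C. cId C x \<in> cArr C \<and> cDom C (cId C x) = x \<and> cCod C (cId C x) = x) \<and>
     (\<forall>f\<in>cArr C. \<forall>g\<in>cArr C. cCod C f = cDom C g \<longrightarrow>
         cComp C g f \<in> cArr C \<and> cDom C (cComp C g f) = cDom C f \<and> cCod C (cComp C g f) = cCod C g) \<and>
     (\<forall>f\<in>cArr C. cComp C f (cId C (cDom C f)) = f \<and> cComp C (cId C (cCod C f)) f = f) \<and>
     (\<forall>f\<in>cArr C. \<forall>g\<in>cArr C. \<forall>h\<in>cArr C. cCod C f = cDom C g \<longrightarrow> cCod C g = cDom C h \<longrightarrow>
         cComp C h (cComp C g f) = cComp C (cComp C h g) f)"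

text \<open>A functor is given by an object map and a morphism map (only their values on
 the carriers matter).\<close>

definition is_functor :: "('o1, 'a1) cat \<Rightarrow> ('o2, 'a2) cat \<Rightarrow> ('o1 \<Rightarrow> 'o2) \<Rightarrow> ('a1 \<Rightarrow> 'a2) \<Rightarrow> bool" where
  "is_functor C D fo fa \<longleftrightarrow> is_cat C \<and> is_cat D \<and>
     fo ` cObj C \<subseteq> cObj D \<and> fa ` cArr C \<subseteq> cArr D \<and>
     (\<forall>f\<in>cArr C. cDom D (fa f) = fo (cDom C f) \<and> cCod D (fa f) = fo (cCod C f)) \<and>
     (\<forall>x\<in>cObj C. fa (cId C x) = cId D (fo x)) \<and>
     (\<forall>f\<in>cArr C. \<forall>g\<in>cArr C. cCod C f = cDom C g \<longrightarrow> fa (cComp C g f) = cComp D (fa g) (fa f))"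

definition functors_agree :: "('o1, 'a1) cat \<Rightarrow> ('o1 \<Rightarrow> 'o2) \<Rightarrow> ('a1 \<Rightarrow> 'a2) \<Rightarrow> ('o1 \<Rightarrow> 'o2) \<Rightarrow> ('a1 \<Rightarrow> 'a2) \<Rightarrow> bool" where
  "functors_agree C fo fa go ga \<longleftrightarrow> (\<forall>x\<in>cObj C. fo x = go x) \<and> (\<forall>f\<in>cArr C. fa f = ga f)"

text \<open>A lens A \<rightarrow> B: get functor (fo, fa) together with puts p x b (for x an object
 of A and b a morphism of B with domain fo x).\<close>

definition is_lens :: "('o1, 'a1) cat \<Rightarrow> ('o2, 'a2) cat \<Rightarrow> ('o1 \<Rightarrow> 'o2) \<Rightarrow> ('a1 \<Rightarrow> 'a2)
                        \<Rightarrow> ('o1 \<Rightarrow> 'a2 \<Rightarrow> 'a1) \<Rightarrow> bool" where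
  "is_lens A B fo fa p \<longleftrightarrow> is_functor A B fo fa \<and>
     (\<forall>x\<in>cObj A. \<forall>b\<in>cArr B. cDom B b = fo x \<longrightarrow>
        p x b \<in> cArr A \<and> cDom A (p x b) = x \<and> fa (p x b) = b) \<and>
     (\<forall>x\<in>cObj A. p x (cId B (fo x)) = cId A x) \<and>
     (\<forall>x\<in>cObj A. \<forall>b\<in>cArr B. \<forall>b'\<in>cArr B. cDom B b = fo x \<longrightarrow> cDom B b' = fo (cCod A (p x b)) \<longrightarrow>
        p x (cComp B b' b) = cComp A (p (cCod A (p x b)) b') (p x b))"

definition lens_comp_put :: "('o1 \<Rightarrow> 'o2) \<Rightarrow> ('o1 \<Rightarrow> 'a2 \<Rightarrow> 'a1) \<Rightarrow> ('o2 \<Rightarrow> 'a3 \<Rightarrow> 'a2) \<Rightarrow> ('o1 \<Rightarrow> 'a3 \<Rightarrow> 'a1)" where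
  "lens_comp_put Fo pF pG = (\<lambda>x c. pF x (pG (Fo x) c))"

definition lenses_eq :: "('o1, 'a1) cat \<Rightarrow> ('o2, 'a2) cat
     \<Rightarrow> ('o1 \<Rightarrow> 'o2) \<Rightarrow> ('a1 \<Rightarrow> 'a2) \<Rightarrow> ('o1 \<Rightarrow> 'a2 \<Rightarrow> 'a1)
     \<Rightarrow> ('o1 \<Rightarrow> 'o2) \<Rightarrow> ('a1 \<Rightarrow> 'a2) \<Rightarrow> ('o1 \<Rightarrow> 'a2 \<Rightarrow> 'a1) \<Rightarrow> bool" where
  "lenses_eq A B fo fa p go ga q \<longleftrightarrow> functors_agree A fo fa go ga \<and>
     (\<forall>x\<in>cObj A. \<forall>b\<in>cArr B. cDom B b = fo x \<longrightarrow> p x b = q x b)"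

definition discrete_opfibration :: "('o1, 'a1) cat \<Rightarrow> ('o2, 'a2) cat \<Rightarrow> ('o1 \<Rightarrow> 'o2) \<Rightarrow> ('a1 \<Rightarrow> 'a2) \<Rightarrow> bool" where
  "discrete_opfibration A B fo fa \<longleftrightarrow> is_functor A B fo fa \<and>
     (\<forall>x\<in>cObj A. \<forall>b\<in>cArr B. cDom B b = fo x \<longrightarrow> (\<exists>!a. a \<in> cArr A \<and> cDom A a = x \<and> fa a = b))"

definition cosieve :: "('o1, 'a1) cat \<Rightarrow> ('o2, 'a2) cat \<Rightarrow> ('o1 \<Rightarrow> 'o2) \<Rightarrow> ('a1 \<Rightarrow> 'a2) \<Rightarrow> bool" where
  "cosieve A B fo fa \<longleftrightarrow> discrete_opfibration A B fo fa \<and> inj_on fo (cObj A)"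

definition pushout_univ_for ::
  "('oa, 'aa) cat \<Rightarrow> ('ob, 'ab) cat \<Rightarrow> ('oc, 'ac) cat \<Rightarrow> ('ox, 'ax) cat
   \<Rightarrow> ('oa \<Rightarrow> 'ob) \<Rightarrow> ('aa \<Rightarrow> 'ab)
   \<Rightarrow> ('ob \<Rightarrow> 'oc) \<Rightarrow> ('ab \<Rightarrow> 'ac) \<Rightarrow> ('ob \<Rightarrow> 'oc) \<Rightarrow> ('ab \<Rightarrow> 'ac) \<Rightarrow> bool" where
  "pushout_univ_for A B C D Fo Fa J1o J1a J2o J2a \<longleftrightarrow>
     (\<forall>K1o K1a K2o K2a.
        is_functor B D K1o K1a \<and> is_functor B D K2o K2a \<and>
        functors_agree A (K1o \<circ> Fo) (K1a \<circ> Fa) (K2o \<circ> Fo) (K2a \<circ> Fa) \<longrightarrow>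
        (\<exists>Ho Ha. is_functor C D Ho Ha \<and>
           functors_agree B (Ho \<circ> J1o) (Ha \<circ> J1a) K1o K1a \<and>
           functors_agree B (Ho \<circ> J2o) (Ha \<circ> J2a) K2o K2a \<and>
           (\<forall>Ho' Ha'. is_functor C D Ho' Ha' \<and>
              functors_agree B (Ho' \<circ> J1o) (Ha' \<circ> J1a) K1o K1a \<and>
              functors_agree B (Ho' \<circ> J2o) (Ha' \<circ> J2a) K2o K2a \<longrightarrow>
              functors_agree C Ho Ha Ho' Ha')))"

text \<open>Since HOL cannot quantify over all types inside a formula, the universal property is
 required against all test categories whose carriers live in C's own types and in the
 types (('ob + 'ob) set, ('ab + 'ab) list set), which are large enough to host the
 standard construction of the pushout (quotients of the coproduct, paths of morphisms).
 Universality against both classes forces C to be isomorphic (under B) to the genuine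
 pushout in Cat, so this is equivalent to the usual notion.\<close>

definition is_cokernel_pair ::
  "('oa, 'aa) cat \<Rightarrow> ('ob, 'ab) cat \<Rightarrow> ('oc, 'ac) cat
   \<Rightarrow> ('oa \<Rightarrow> 'ob) \<Rightarrow> ('aa \<Rightarrow> 'ab)
   \<Rightarrow> ('ob \<Rightarrow> 'oc) \<Rightarrow> ('ab \<Rightarrow> 'ac) \<Rightarrow> ('ob \<Rightarrow> 'oc) \<Rightarrow> ('ab \<Rightarrow> 'ac) \<Rightarrow> bool" where
  "is_cokernel_pair A B C Fo Fa J1o J1a J2o J2a \<longleftrightarrow>
     is_functor A B Fo Fa \<and> is_functor B C J1o J1a \<and> is_functor B C J2o J2a \<and>
     functors_agree A (J1o \<circ> Fo) (J1a \<circ> Fa) (J2o \<circ> Fo) (J2a \<circ> Fa) \<and>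
     (\<forall>D :: ('oc, 'ac) cat. pushout_univ_for A B C D Fo Fa J1o J1a J2o J2a) \<and>
     (\<forall>D :: (('ob + 'ob) set, ('ab + 'ab) list set) cat.
        pushout_univ_for A B C D Fo Fa J1o J1a J2o J2a)"

end

theory Submission
  imports Defs
begin

definition Ko :: "'ob set \<Rightarrow> bool \<Rightarrow> 'ob \<Rightarrow> ('ob + 'ob) set" where
  "Ko S s y = (if s \<or> y \<in> S then {Inl y} else {}) \<union> (if \<not> s \<or> y \<in> S then {Inr y} else {})"

definition Ka :: "('ob, 'ab) cat \<Rightarrow> 'ob set \<Rightarrow> bool \<Rightarrow> 'ab \<Rightarrow> ('ab + 'ab) list set" where
  "Ka B S s b = (if s \<or> cDom B b \<in> S then {[Inl b]} else {}) \<union> (if \<not> s \<or> cDom B b \<in> S then {[Inr b]} else {})"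

definition decO :: "('ob + 'ob) set \<Rightarrow> bool \<times> 'ob" where
  "decO Y = (if \<exists>y. Inl y \<in> Y then (True, SOME y. Inl y \<in> Y) else (False, SOME y. Inr y \<in> Y))"

definition decA :: "('ab + 'ab) list set \<Rightarrow> bool \<times> 'ab" where
  "decA X = (if \<exists>b. [Inl b] \<in> X then (True, SOME b. [Inl b] \<in> X) else (False, SOME b. [Inr b] \<in> X))"

definition PC :: "('ob, 'ab) cat \<Rightarrow> 'ob set \<Rightarrow> (('ob + 'ob) set, ('ab + 'ab) list set) cat" where
  "PC B S = \<lparr>cObj = {Ko S s y | s y. y \<in> cObj B}, cArr = {Ka B S s b | s b. b \<in> cArr B},
     cDom = (\<lambda>X. Ko S (fst (decA X)) (cDom B (snd (decA X)))),
     cCod = (\<lambda>X. Ko S (fst (decA X)) (cCod B (snd (decA X)))),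
     cId = (\<lambda>Y. Ka B S (fst (decO Y)) (cId B (snd (decO Y)))),
     cComp = (\<lambda>X2 X1. Ka B S (fst (decA X1)) (cComp B (snd (decA X2)) (snd (decA X1))))\<rparr>"

lemma Ko_mem: "Inl z \<in> Ko S s y \<longleftrightarrow> z = y \<and> (s \<or> y \<in> S)"
   "Inr z \<in> Ko S s y \<longleftrightarrow> z = y \<and> (\<not> s \<or> y \<in> S)"
  unfolding Ko_def by auto

lemma Ka_mem: "[Inl z] \<in> Ka B S s b \<longleftrightarrow> z = b \<and> (s \<or> cDom B b \<in> S)"
   "[Inr z] \<in> Ka B S s b \<longleftrightarrow> z = b \<and> (\<not> s \<or> cDom B b \<in> S)"
  unfolding Ka_def by auto

lemma decO_Ko[simp]: "decO (Ko S s y) = (s \<or> y \<in> S, y)"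
  unfolding decO_def Ko_mem by simp

lemma decA_Ka[simp]: "decA (Ka B S s b) = (s \<or> cDom B b \<in> S, b)"
  unfolding decA_def Ka_mem by simp

lemma Ko_norm[simp]: "Ko S (s \<or> y \<in> S) y = Ko S s y"
  unfolding Ko_def by (cases s; cases "y \<in> S"; simp)

lemma Ka_norm[simp]: "Ka B S (s \<or> cDom B b \<in> S) b = Ka B S s b"
  unfolding Ka_def by (cases s; cases "cDom B b \<in> S"; simp)

lemma Ko_eq: "Ko S s y = Ko S t z \<longleftrightarrow> y = z \<and> (s = t \<or> y \<in> S)"
proof
  assume e: "Ko S s y = Ko S t z"
  have "y = z"
  proof (cases "s \<or> y \<in> S")
    case True
    then have "Inl y \<in> Ko S t z" using e Ko_mem(1)[of y S s y] by simp
    then show ?thesis by (simp add: Ko_mem)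
  next
    case False
    then have "Inr y \<in> Ko S t z" using e Ko_mem(2)[of y S s y] by simp
    then show ?thesis by (simp add: Ko_mem)
  qed
  then show "y = z \<and> (s = t \<or> y \<in> S)" using e unfolding Ko_def
    by (cases s; cases t; cases "y \<in> S"; simp)
next
  assume "y = z \<and> (s = t \<or> y \<in> S)"
  then show "Ko S s y = Ko S t z" unfolding Ko_def by (cases s; cases t; auto)
qed

lemma Ka_eq: "Ka B S s b = Ka B S t c \<longleftrightarrow> b = c \<and> (s = t \<or> cDom B b \<in> S)"
proof
  assume e: "Ka B S s b = Ka B S t c"
  have "b = c"
  proof (cases "s \<or> cDom B b \<in> S")
    case True
    then have "[Inl b] \<in> Ka B S t c" using e Ka_mem(1)[of b B S s b] by simp
    then show ?thesis by (simp add: Ka_mem)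
  next
    case False
    then have "[Inr b] \<in> Ka B S t c" using e Ka_mem(2)[of b B S s b] by simp
    then show ?thesis by (simp add: Ka_mem)
  qed
  then show "b = c \<and> (s = t \<or> cDom B b \<in> S)" using e unfolding Ka_def
    by (cases s; cases t; cases "cDom B b \<in> S"; simp)
next
  assume "b = c \<and> (s = t \<or> cDom B b \<in> S)"
  then show "Ka B S s b = Ka B S t c" unfolding Ka_def by (cases s; cases t; auto)
qed

lemma Ko_S: "y \<in> S \<Longrightarrow> Ko S s y = Ko S t y"
  using Ko_eq by metis

lemma Ka_S: "cDom B b \<in> S \<Longrightarrow> Ka B S s b = Ka B S t b"
  using Ka_eq by metis

lemma PC_simps[simp]:
  "cObj (PC B S) = {Ko S s y | s y. y \<in> cObj B}"
  "cArr (PC B S) = {Ka B S s b | s b. b \<in> cArr B}"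
  "cDom (PC B S) (Ka B S s b) = Ko S s (cDom B b)"
  "cComp (PC B S) (Ka B S t g) (Ka B S s f) = Ka B S (s \<or> cDom B f \<in> S) (cComp B g f)"
  "cId (PC B S) (Ko S s y) = Ka B S (s \<or> y \<in> S) (cId B y)"
  unfolding PC_def by simp_all

lemma PC_cod:
  assumes clo: "\<forall>b\<in>cArr B. cDom B b \<in> S \<longrightarrow> cCod B b \<in> S" and "b \<in> cArr B"
  shows "cCod (PC B S) (Ka B S s b) = Ko S s (cCod B b)"
proof -
  have "cCod B b \<in> S" if "cDom B b \<in> S" using assms that by blast
  then have "Ko S (s \<or> cDom B b \<in> S) (cCod B b) = Ko S s (cCod B b)"
    by (cases "cDom B b \<in> S") (simp_all add: Ko_S)
  then show ?thesis unfolding PC_def by simp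
qed

lemma PC_arrE:
  assumes "X \<in> cArr (PC B S)"
  obtains s b where "X = Ka B S s b" "b \<in> cArr B"
  using assms by auto

lemma PC_objE:
  assumes "Y \<in> cObj (PC B S)"
  obtains s y where "Y = Ko S s y" "y \<in> cObj B"
  using assms by auto

lemma catD:
  assumes "is_cat C"
  shows "\<And>f. f \<in> cArr C \<Longrightarrow> cDom C f \<in> cObj C"
    "\<And>f. f \<in> cArr C \<Longrightarrow> cCod C f \<in> cObj C"
    "\<And>x. x \<in> cObj C \<Longrightarrow> cId C x \<in> cArr C"
    "\<And>x. x \<in> cObj C \<Longrightarrow> cDom C (cId C x) = x"
    "\<And>x. x \<in> cObj C \<Longrightarrow> cCod C (cId C x) = x"
    "\<And>f g. f \<in> cArr C \<Longrightarrow> g \<in> cArr C \<Longrightarrow> cCod C f = cDom C g \<Longrightarrow> cComp C g f \<in> cArr C"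
    "\<And>f g. f \<in> cArr C \<Longrightarrow> g \<in> cArr C \<Longrightarrow> cCod C f = cDom C g \<Longrightarrow> cDom C (cComp C g f) = cDom C f"
    "\<And>f g. f \<in> cArr C \<Longrightarrow> g \<in> cArr C \<Longrightarrow> cCod C f = cDom C g \<Longrightarrow> cCod C (cComp C g f) = cCod C g"
    "\<And>f. f \<in> cArr C \<Longrightarrow> cComp C f (cId C (cDom C f)) = f"
    "\<And>f. f \<in> cArr C \<Longrightarrow> cComp C (cId C (cCod C f)) f = f"
    "\<And>f g h. f \<in> cArr C \<Longrightarrow> g \<in> cArr C \<Longrightarrow> h \<in> cArr C \<Longrightarrow> cCod C f = cDom C g \<Longrightarrow> cCod C g = cDom C h \<Longrightarrow>
         cComp C h (cComp C g f) = cComp C (cComp C h g) f"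
  using assms unfolding is_cat_def by blast+

lemma PC_comp:
  assumes B: "is_cat B" and "f \<in> cArr B" "g \<in> cArr B" "cCod B f = cDom B g"
  shows "cComp (PC B S) (Ka B S t g) (Ka B S s f) = Ka B S s (cComp B g f)"
proof -
  have "cDom B (cComp B g f) = cDom B f" using catD[OF B] assms by blast
  then show ?thesis using Ka_norm[of B S s "cComp B g f"] by simp
qed

lemma PC_id:
  assumes B: "is_cat B" and "y \<in> cObj B"
  shows "cId (PC B S) (Ko S s y) = Ka B S s (cId B y)"
proof -
  have "cDom B (cId B y) = y" using catD[OF B] assms by blast
  then show ?thesis using Ka_norm[of B S s "cId B y"] by simp
qed

lemma PC_cat:
  assumes B: "is_cat B" and clo: "\<forall>b\<in>cArr B. cDom B b \<in> S \<longrightarrow> cCod B b \<in> S"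
  shows "is_cat (PC B S)"
  unfolding is_cat_def
proof (intro conjI ballI impI)
  fix X assume "X \<in> cArr (PC B S)"
  then obtain s b where X: "X = Ka B S s b" "b \<in> cArr B" by (rule PC_arrE)
  have db: "cDom B b \<in> cObj B" "cCod B b \<in> cObj B" using X(2) catD(1,2)[OF B] by blast+
  have cX: "cCod (PC B S) X = Ko S s (cCod B b)" using X PC_cod[OF clo] by simp
  have dX: "cDom (PC B S) X = Ko S s (cDom B b)" using X by simp
  show "cDom (PC B S) X \<in> cObj (PC B S)" unfolding dX PC_simps using db by blast
  show "cCod (PC B S) X \<in> cObj (PC B S)" unfolding cX PC_simps using db by blast
  have i1: "cId B (cDom B b) \<in> cArr B" "cCod B (cId B (cDom B b)) = cDom B b"
    using db catD(3,5)[OF B] by blast+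
  have i2: "cId B (cCod B b) \<in> cArr B" "cDom B (cId B (cCod B b)) = cCod B b"
    using db catD(3,4)[OF B] by blast+
  have "cComp (PC B S) X (cId (PC B S) (cDom (PC B S) X)) = Ka B S s (cComp B b (cId B (cDom B b)))"
    using dX PC_id[OF B db(1)] PC_comp[OF B i1(1) X(2) i1(2)] X(1) by simp
  also have "\<dots> = X" using catD(9)[OF B X(2)] X(1) by simp
  finally show "cComp (PC B S) X (cId (PC B S) (cDom (PC B S) X)) = X" .
  have "cComp (PC B S) (cId (PC B S) (cCod (PC B S) X)) X = Ka B S s (cComp B (cId B (cCod B b)) b)"
    using cX PC_id[OF B db(2)] PC_comp[OF B X(2) i2(1) i2(2)[symmetric]] X(1) by simp
  also have "\<dots> = X" using catD(10)[OF B X(2)] X(1) by simp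
  finally show "cComp (PC B S) (cId (PC B S) (cCod (PC B S) X)) X = X" .
next
  fix Y assume "Y \<in> cObj (PC B S)"
  then obtain s y where Y: "Y = Ko S s y" "y \<in> cObj B" by (rule PC_objE)
  have iy: "cId B y \<in> cArr B" "cDom B (cId B y) = y" "cCod B (cId B y) = y"
    using Y catD(3,4,5)[OF B] by blast+
  have e: "cId (PC B S) Y = Ka B S s (cId B y)" using Y PC_id[OF B] by simp
  then show "cId (PC B S) Y \<in> cArr (PC B S)" unfolding e PC_simps using iy by blast
  show "cDom (PC B S) (cId (PC B S) Y) = Y" using e iy Y by simp
  show "cCod (PC B S) (cId (PC B S) Y) = Y" using e iy Y PC_cod[OF clo iy(1)] by simp
next
  fix X1 X2 assume x1: "X1 \<in> cArr (PC B S)" and x2: "X2 \<in> cArr (PC B S)"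
    and c: "cCod (PC B S) X1 = cDom (PC B S) X2"
  obtain s f where X1: "X1 = Ka B S s f" "f \<in> cArr B" using x1 by (rule PC_arrE)
  obtain t g where X2: "X2 = Ka B S t g" "g \<in> cArr B" using x2 by (rule PC_arrE)
  note X = X1 X2
  have "Ko S s (cCod B f) = Ko S t (cDom B g)" using c X PC_cod[OF clo X1(2)] by simp
  then have e: "cCod B f = cDom B g" and st: "s = t \<or> cDom B g \<in> S" unfolding Ko_eq by auto
  have st': "Ko S s (cCod B g) = Ko S t (cCod B g)"
  proof (cases "s = t")
    case False
    then have "cDom B g \<in> S" using st by blast
    then have "cCod B g \<in> S" using clo X by blast
    then show ?thesis by (rule Ko_S)
  qed simp
  have gf: "cComp B g f \<in> cArr B" "cDom B (cComp B g f) = cDom B f" "cCod B (cComp B g f) = cCod B g"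
    using X e catD(6,7,8)[OF B] by simp_all
  have cm: "cComp (PC B S) X2 X1 = Ka B S s (cComp B g f)"
    using X e PC_comp[OF B] by simp
  show "cComp (PC B S) X2 X1 \<in> cArr (PC B S)"
    unfolding cm PC_simps using gf by blast
  show "cDom (PC B S) (cComp (PC B S) X2 X1) = cDom (PC B S) X1"
    using X cm gf by simp
  show "cCod (PC B S) (cComp (PC B S) X2 X1) = cCod (PC B S) X2"
    using X cm gf st' PC_cod[OF clo] by simp
next
  fix X1 X2 X3 assume x1: "X1 \<in> cArr (PC B S)" and x2: "X2 \<in> cArr (PC B S)" and x3: "X3 \<in> cArr (PC B S)"
    and c: "cCod (PC B S) X1 = cDom (PC B S) X2" "cCod (PC B S) X2 = cDom (PC B S) X3"
  obtain s f where X1: "X1 = Ka B S s f" "f \<in> cArr B" using x1 by (rule PC_arrE)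
  obtain t g where X2: "X2 = Ka B S t g" "g \<in> cArr B" using x2 by (rule PC_arrE)
  obtain u h where X3: "X3 = Ka B S u h" "h \<in> cArr B" using x3 by (rule PC_arrE)
  note X = X1 X2 X3
  have "Ko S s (cCod B f) = Ko S t (cDom B g)" using c X PC_cod[OF clo X1(2)] by simp
  then have e1: "cCod B f = cDom B g" unfolding Ko_eq by auto
  have "Ko S t (cCod B g) = Ko S u (cDom B h)" using c X PC_cod[OF clo X2(2)] by simp
  then have e2: "cCod B g = cDom B h" unfolding Ko_eq by auto
  note e = e1 e2
  show "cComp (PC B S) X3 (cComp (PC B S) X2 X1) = cComp (PC B S) (cComp (PC B S) X3 X2) X1"
  proof -
    have a: "cComp B g f \<in> cArr B" "cCod B (cComp B g f) = cDom B h"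
      using X e catD(6,8)[OF B] by simp_all
    have b: "cComp B h g \<in> cArr B" "cCod B f = cDom B (cComp B h g)"
      using X e catD(6,7)[OF B] by simp_all
    have "cComp (PC B S) X3 (cComp (PC B S) X2 X1) = Ka B S s (cComp B h (cComp B g f))"
      using X e PC_comp[OF B] a by simp
    also have "\<dots> = Ka B S s (cComp B (cComp B h g) f)" using X e catD(11)[OF B] by simp
    also have "\<dots> = cComp (PC B S) (cComp (PC B S) X3 X2) X1"
      using X e PC_comp[OF B] b by simp
    finally show ?thesis .
  qed
qed

lemma K_functor:
  assumes B: "is_cat B" and clo: "\<forall>b\<in>cArr B. cDom B b \<in> S \<longrightarrow> cCod B b \<in> S"
  shows "is_functor B (PC B S) (Ko S s) (Ka B S s)"
  unfolding is_functor_def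
proof (intro conjI ballI impI subsetI)
  show "is_cat B" by fact
  show "is_cat (PC B S)" using PC_cat[OF B clo] .
next
  fix Z assume "Z \<in> Ko S s ` cObj B" then show "Z \<in> cObj (PC B S)" by auto
next
  fix Z assume "Z \<in> Ka B S s ` cArr B" then show "Z \<in> cArr (PC B S)" by auto
next
  fix f assume f: "f \<in> cArr B"
  show "cDom (PC B S) (Ka B S s f) = Ko S s (cDom B f)" by simp
  show "cCod (PC B S) (Ka B S s f) = Ko S s (cCod B f)" using PC_cod[OF clo f] .
next
  fix x assume "x \<in> cObj B" then show "Ka B S s (cId B x) = cId (PC B S) (Ko S s x)"
    using PC_id[OF B] by simp
next
  fix f g assume "f \<in> cArr B" "g \<in> cArr B" "cCod B f = cDom B g"
  then show "Ka B S s (cComp B g f) = cComp (PC B S) (Ka B S s g) (Ka B S s f)"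
    using PC_comp[OF B] by simp
qed

definition Gob :: "('ob \<Rightarrow> 'oc) \<Rightarrow> ('ob \<Rightarrow> 'oc) \<Rightarrow> ('ob + 'ob) set \<Rightarrow> 'oc" where
  "Gob J1 J2 Y = (if fst (decO Y) then J1 (snd (decO Y)) else J2 (snd (decO Y)))"

definition Gar :: "('ab \<Rightarrow> 'ac) \<Rightarrow> ('ab \<Rightarrow> 'ac) \<Rightarrow> ('ab + 'ab) list set \<Rightarrow> 'ac" where
  "Gar J1 J2 X = (if fst (decA X) then J1 (snd (decA X)) else J2 (snd (decA X)))"

lemma Gob_Ko: "\<forall>y\<in>S. J1 y = J2 y \<Longrightarrow> Gob J1 J2 (Ko S s y) = (if s then J1 y else J2 y)"
  unfolding Gob_def by auto

lemma Gar_Ka: "\<forall>b\<in>cArr B. cDom B b \<in> S \<longrightarrow> J1 b = J2 b \<Longrightarrow> b \<in> cArr B \<Longrightarrow>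
    Gar J1 J2 (Ka B S s b) = (if s then J1 b else J2 b)"
  unfolding Gar_def by auto

lemma functorD:
  assumes "is_functor C D fo fa"
  shows "is_cat C" "is_cat D" "\<And>x. x \<in> cObj C \<Longrightarrow> fo x \<in> cObj D"
    "\<And>f. f \<in> cArr C \<Longrightarrow> fa f \<in> cArr D"
    "\<And>f. f \<in> cArr C \<Longrightarrow> cDom D (fa f) = fo (cDom C f)"
    "\<And>f. f \<in> cArr C \<Longrightarrow> cCod D (fa f) = fo (cCod C f)"
    "\<And>x. x \<in> cObj C \<Longrightarrow> fa (cId C x) = cId D (fo x)"
    "\<And>f g. f \<in> cArr C \<Longrightarrow> g \<in> cArr C \<Longrightarrow> cCod C f = cDom C g \<Longrightarrow> fa (cComp C g f) = cComp D (fa g) (fa f)"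
  using assms unfolding is_functor_def by blast+

lemma G_functor:
  assumes B: "is_cat B" and clo: "\<forall>b\<in>cArr B. cDom B b \<in> S \<longrightarrow> cCod B b \<in> S"
    and J1: "is_functor B C J1o J1a" and J2: "is_functor B C J2o J2a"
    and co: "\<forall>y\<in>S. J1o y = J2o y" and ca: "\<forall>b\<in>cArr B. cDom B b \<in> S \<longrightarrow> J1a b = J2a b"
  shows "is_functor (PC B S) C (Gob J1o J2o) (Gar J1a J2a)"
  unfolding is_functor_def
proof (intro conjI ballI impI subsetI)
  show "is_cat (PC B S)" using PC_cat[OF B clo] .
  show "is_cat C" using functorD(2)[OF J1] .
next
  fix Z assume "Z \<in> Gob J1o J2o ` cObj (PC B S)"
  then obtain s y where "Z = Gob J1o J2o (Ko S s y)" "y \<in> cObj B" by auto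
  then show "Z \<in> cObj C" using Gob_Ko[OF co] functorD(3)[OF J1] functorD(3)[OF J2] by auto
next
  fix Z assume "Z \<in> Gar J1a J2a ` cArr (PC B S)"
  then obtain s b where "Z = Gar J1a J2a (Ka B S s b)" "b \<in> cArr B" by auto
  then show "Z \<in> cArr C" using Gar_Ka[OF ca] functorD(4)[OF J1] functorD(4)[OF J2] by auto
next
  fix X assume "X \<in> cArr (PC B S)"
  then obtain s b where X: "X = Ka B S s b" "b \<in> cArr B" by (rule PC_arrE)
  show "cDom C (Gar J1a J2a X) = Gob J1o J2o (cDom (PC B S) X)"
    using X Gar_Ka[OF ca] Gob_Ko[OF co] functorD(5)[OF J1] functorD(5)[OF J2] by auto
  show "cCod C (Gar J1a J2a X) = Gob J1o J2o (cCod (PC B S) X)"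
    using X Gar_Ka[OF ca] Gob_Ko[OF co] functorD(6)[OF J1] functorD(6)[OF J2] PC_cod[OF clo] by auto
next
  fix Y assume "Y \<in> cObj (PC B S)"
  then obtain s y where Y: "Y = Ko S s y" "y \<in> cObj B" by (rule PC_objE)
  show "Gar J1a J2a (cId (PC B S) Y) = cId C (Gob J1o J2o Y)"
    using Y Gar_Ka[OF ca] Gob_Ko[OF co] functorD(7)[OF J1] functorD(7)[OF J2] PC_id[OF B] catD(3)[OF B] by auto
next
  fix X1 X2 assume x1: "X1 \<in> cArr (PC B S)" and x2: "X2 \<in> cArr (PC B S)"
    and c: "cCod (PC B S) X1 = cDom (PC B S) X2"
  obtain s f where X1: "X1 = Ka B S s f" "f \<in> cArr B" using x1 by (rule PC_arrE)
  obtain t g where X2: "X2 = Ka B S t g" "g \<in> cArr B" using x2 by (rule PC_arrE)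
  note X = X1 X2
  have "Ko S s (cCod B f) = Ko S t (cDom B g)" using c X PC_cod[OF clo X1(2)] by simp
  then have e: "cCod B f = cDom B g" and st: "s = t \<or> cDom B g \<in> S" unfolding Ko_eq by auto
  have gg: "(if t then J1a g else J2a g) = (if s then J1a g else J2a g)"
    using st ca X by auto
  have "Gar J1a J2a (cComp (PC B S) X2 X1) = (if s then J1a (cComp B g f) else J2a (cComp B g f))"
    using X e PC_comp[OF B] Gar_Ka[OF ca] catD(6)[OF B] by auto
  also have "\<dots> = cComp C (if s then J1a g else J2a g) (if s then J1a f else J2a f)"
    using functorD(8)[OF J1] functorD(8)[OF J2] X e by auto
  also have "\<dots> = cComp C (Gar J1a J2a X2) (Gar J1a J2a X1)"
    using X Gar_Ka[OF ca] gg by auto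
  finally show "Gar J1a J2a (cComp (PC B S) X2 X1) = cComp C (Gar J1a J2a X2) (Gar J1a J2a X1)" .
qed

lemma comp_functor:
  assumes F: "is_functor C D fo fa" and G: "is_functor D E go ga"
  shows "is_functor C E (go \<circ> fo) (ga \<circ> fa)"
  unfolding is_functor_def
proof (intro conjI ballI impI subsetI)
  show "is_cat C" using functorD(1)[OF F] .
  show "is_cat E" using functorD(2)[OF G] .
next
  fix Z assume "Z \<in> (go \<circ> fo) ` cObj C" then show "Z \<in> cObj E"
    using functorD(3)[OF F] functorD(3)[OF G] by auto
next
  fix Z assume "Z \<in> (ga \<circ> fa) ` cArr C" then show "Z \<in> cArr E"
    using functorD(4)[OF F] functorD(4)[OF G] by auto
next
  fix f assume f: "f \<in> cArr C"
  show "cDom E ((ga \<circ> fa) f) = (go \<circ> fo) (cDom C f)"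
    using f functorD(4,5)[OF F] functorD(5)[OF G] by simp
  show "cCod E ((ga \<circ> fa) f) = (go \<circ> fo) (cCod C f)"
    using f functorD(4,6)[OF F] functorD(6)[OF G] by simp
next
  fix x assume "x \<in> cObj C" then show "(ga \<circ> fa) (cId C x) = cId E ((go \<circ> fo) x)"
    using functorD(3,7)[OF F] functorD(7)[OF G] by simp
next
  fix f g assume fg: "f \<in> cArr C" "g \<in> cArr C" "cCod C f = cDom C g"
  then show "(ga \<circ> fa) (cComp C g f) = cComp E ((ga \<circ> fa) g) ((ga \<circ> fa) f)"
    using functorD(4,5,6,8)[OF F] functorD(8)[OF G] by simp
qed

lemma id_functor:
  assumes "is_cat C"
  shows "is_functor C C id id"
  using assms unfolding is_functor_def by auto


lemma pushout_useD:
  assumes "pushout_univ_for A B C D Fo Fa J1o J1a J2o J2a"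
    and "is_functor B D K1o K1a" "is_functor B D K2o K2a"
    and "functors_agree A (K1o \<circ> Fo) (K1a \<circ> Fa) (K2o \<circ> Fo) (K2a \<circ> Fa)"
  obtains Ho Ha where "is_functor C D Ho Ha"
    "functors_agree B (Ho \<circ> J1o) (Ha \<circ> J1a) K1o K1a"
    "functors_agree B (Ho \<circ> J2o) (Ha \<circ> J2a) K2o K2a"
    "\<And>Ho' Ha'. is_functor C D Ho' Ha' \<Longrightarrow>
              functors_agree B (Ho' \<circ> J1o) (Ha' \<circ> J1a) K1o K1a \<Longrightarrow>
              functors_agree B (Ho' \<circ> J2o) (Ha' \<circ> J2a) K2o K2a \<Longrightarrow>
              functors_agree C Ho Ha Ho' Ha'"
  using assms unfolding pushout_univ_for_def by blast

theorem proposition3p9: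
  fixes A :: "('oa, 'aa) cat" and B :: "('ob, 'ab) cat" and C :: "('oc, 'ac) cat"
    and Fo :: "'oa \<Rightarrow> 'ob" and Fa :: "'aa \<Rightarrow> 'ab" and pF :: "'oa \<Rightarrow> 'ab \<Rightarrow> 'aa"
    and J1o J2o :: "'ob \<Rightarrow> 'oc" and J1a J2a :: "'ab \<Rightarrow> 'ac"
  assumes lensF: "is_lens A B Fo Fa pF"
    and cok: "is_cokernel_pair A B C Fo Fa J1o J1a J2o J2a"
  shows "cosieve B C J1o J1a \<and> cosieve B C J2o J2a \<and>
    (\<forall>p1 p2. is_lens B C J1o J1a p1 \<and> is_lens B C J2o J2a p2 \<longrightarrow>
       lenses_eq A C (J1o \<circ> Fo) (J1a \<circ> Fa) (lens_comp_put Fo pF p1)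
                     (J2o \<circ> Fo) (J2a \<circ> Fa) (lens_comp_put Fo pF p2))"
proof -
  define S where "S = Fo ` cObj A"
  have F: "is_functor A B Fo Fa" using lensF unfolding is_lens_def by blast
  have A: "is_cat A" and B: "is_cat B" using functorD(1,2)[OF F] by auto
  have put: "\<And>x b. x \<in> cObj A \<Longrightarrow> b \<in> cArr B \<Longrightarrow> cDom B b = Fo x \<Longrightarrow>
      pF x b \<in> cArr A \<and> cDom A (pF x b) = x \<and> Fa (pF x b) = b"
    using lensF unfolding is_lens_def by blast
  have clo: "\<forall>b\<in>cArr B. cDom B b \<in> S \<longrightarrow> cCod B b \<in> S"
  proof (intro ballI impI)
    fix b assume b: "b \<in> cArr B" and "cDom B b \<in> S"
    then obtain x where x: "x \<in> cObj A" "cDom B b = Fo x" unfolding S_def by auto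
    have a: "pF x b \<in> cArr A" "Fa (pF x b) = b" using put[OF x(1) b x(2)] by auto
    have "cCod B b = Fo (cCod A (pF x b))" using functorD(6)[OF F a(1)] a(2) by simp
    moreover have "cCod A (pF x b) \<in> cObj A" using catD(2)[OF A a(1)] .
    ultimately show "cCod B b \<in> S" unfolding S_def by blast
  qed
  have J1: "is_functor B C J1o J1a" and J2: "is_functor B C J2o J2a"
    and agr: "functors_agree A (J1o \<circ> Fo) (J1a \<circ> Fa) (J2o \<circ> Fo) (J2a \<circ> Fa)"
    and univC: "pushout_univ_for A B C C Fo Fa J1o J1a J2o J2a"
    and univP: "pushout_univ_for A B C (PC B S) Fo Fa J1o J1a J2o J2a"
    using cok unfolding is_cokernel_pair_def by blast+
  have Ccat: "is_cat C" using functorD(2)[OF J1] .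
  have co: "\<forall>y\<in>S. J1o y = J2o y" using agr unfolding S_def functors_agree_def by auto
  have ca: "\<forall>b\<in>cArr B. cDom B b \<in> S \<longrightarrow> J1a b = J2a b"
  proof (intro ballI impI)
    fix b assume b: "b \<in> cArr B" and "cDom B b \<in> S"
    then obtain x where x: "x \<in> cObj A" "cDom B b = Fo x" unfolding S_def by auto
    have a: "pF x b \<in> cArr A" "Fa (pF x b) = b" using put[OF x(1) b x(2)] by auto
    show "J1a b = J2a b" using agr a unfolding functors_agree_def by force
  qed
  have K: "\<And>s. is_functor B (PC B S) (Ko S s) (Ka B S s)" using K_functor[OF B clo] .
  have KF: "functors_agree A (Ko S True \<circ> Fo) (Ka B S True \<circ> Fa) (Ko S False \<circ> Fo) (Ka B S False \<circ> Fa)"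
    unfolding functors_agree_def
  proof (intro conjI ballI)
    fix x assume "x \<in> cObj A"
    then have "Fo x \<in> S" unfolding S_def by blast
    then show "(Ko S True \<circ> Fo) x = (Ko S False \<circ> Fo) x" using Ko_S by simp
  next
    fix a assume a: "a \<in> cArr A"
    then have "cDom B (Fa a) = Fo (cDom A a)" using functorD(5)[OF F] by blast
    moreover have "cDom A a \<in> cObj A" using catD(1)[OF A a] .
    ultimately have "cDom B (Fa a) \<in> S" unfolding S_def by auto
    then show "(Ka B S True \<circ> Fa) a = (Ka B S False \<circ> Fa) a" using Ka_S by simp
  qed
  obtain Ho Ha where H: "is_functor C (PC B S) Ho Ha"
    and h1: "functors_agree B (Ho \<circ> J1o) (Ha \<circ> J1a) (Ko S True) (Ka B S True)"
    and h2: "functors_agree B (Ho \<circ> J2o) (Ha \<circ> J2a) (Ko S False) (Ka B S False)"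
    by (rule pushout_useD[OF univP K K KF])
  have G: "is_functor (PC B S) C (Gob J1o J2o) (Gar J1a J2a)"
    using G_functor[OF B clo J1 J2 co ca] .
  have GH: "is_functor C C (Gob J1o J2o \<circ> Ho) (Gar J1a J2a \<circ> Ha)" using comp_functor[OF H G] .
  obtain H0o H0a where
    uniq: "\<And>Ho' Ha'. is_functor C C Ho' Ha' \<Longrightarrow>
              functors_agree B (Ho' \<circ> J1o) (Ha' \<circ> J1a) J1o J1a \<Longrightarrow>
              functors_agree B (Ho' \<circ> J2o) (Ha' \<circ> J2a) J2o J2a \<Longrightarrow>
              functors_agree C H0o H0a Ho' Ha'"
    by (rule pushout_useD[OF univC J1 J2 agr]) blast
  have u1: "functors_agree C H0o H0a id id"
    by (rule uniq[OF id_functor[OF Ccat]]) (simp_all add: functors_agree_def)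
  have u2: "functors_agree C H0o H0a (Gob J1o J2o \<circ> Ho) (Gar J1a J2a \<circ> Ha)"
  proof (rule uniq[OF GH])
    show "functors_agree B (Gob J1o J2o \<circ> Ho \<circ> J1o) (Gar J1a J2a \<circ> Ha \<circ> J1a) J1o J1a"
      using h1 Gob_Ko[OF co] Gar_Ka[OF ca] unfolding functors_agree_def by simp
    show "functors_agree B (Gob J1o J2o \<circ> Ho \<circ> J2o) (Gar J1a J2a \<circ> Ha \<circ> J2a) J2o J2a"
      using h2 Gob_Ko[OF co] Gar_Ka[OF ca] unfolding functors_agree_def by simp
  qed
  have GHid: "\<And>c. c \<in> cArr C \<Longrightarrow> Gar J1a J2a (Ha c) = c"
    using u1 u2 unfolding functors_agree_def by simp
  define Jo where "Jo s = (if s then J1o else J2o)" for s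
  define Ja where "Ja s = (if s then J1a else J2a)" for s
  have Js: "\<And>s. is_functor B C (Jo s) (Ja s)" unfolding Jo_def Ja_def using J1 J2 by simp
  have hs: "\<And>s y. y \<in> cObj B \<Longrightarrow> Ho (Jo s y) = Ko S s y"
    "\<And>s b. b \<in> cArr B \<Longrightarrow> Ha (Ja s b) = Ka B S s b"
    using h1 h2 unfolding functors_agree_def Jo_def Ja_def by auto
  have gs: "\<And>s b. b \<in> cArr B \<Longrightarrow> Gar J1a J2a (Ka B S s b) = Ja s b"
    using Gar_Ka[OF ca] unfolding Ja_def by simp
  have kd: "\<exists>b. b \<in> cArr B \<and> cDom B b = x \<and> Ha c = Ka B S s b"
    if x: "x \<in> cObj B" and c: "c \<in> cArr C" and dc: "cDom C c = Jo s x" for s x c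
  proof -
    have "Ha c \<in> cArr (PC B S)" using functorD(4)[OF H c] .
    then obtain t b where tb: "Ha c = Ka B S t b" "b \<in> cArr B" by (rule PC_arrE)
    have "cDom (PC B S) (Ha c) = Ho (Jo s x)" using functorD(5)[OF H c] dc by simp
    then have "Ko S t (cDom B b) = Ko S s x" using tb hs(1)[OF x] by simp
    then have e: "cDom B b = x" and st: "t = s \<or> x \<in> S" unfolding Ko_eq by auto
    have "Ka B S t b = Ka B S s b"
    proof (cases "t = s")
      case False
      then have "cDom B b \<in> S" using st e by simp
      then show ?thesis by (rule Ka_S)
    qed simp
    then show ?thesis using tb e by auto
  qed
  have cos: "cosieve B C (Jo s) (Ja s)" for s
    unfolding cosieve_def discrete_opfibration_def
  proof (intro conjI ballI impI)
    show "is_functor B C (Jo s) (Ja s)" using Js .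
  next
    fix x c assume x: "x \<in> cObj B" and c: "c \<in> cArr C" and dc: "cDom C c = Jo s x"
    obtain b where b: "b \<in> cArr B" "cDom B b = x" "Ha c = Ka B S s b" using kd[OF x c dc] by blast
    have "Ja s b = c" using GHid[OF c] b gs by metis
    moreover have "b' = b" if "b' \<in> cArr B" "Ja s b' = c" for b'
    proof -
      have "Ka B S s b' = Ha (Ja s b')" using hs(2)[OF that(1), of s] by simp
      also have "\<dots> = Ka B S s b" using that(2) b(3) by simp
      finally have "Ka B S s b' = Ka B S s b" .
      then show ?thesis unfolding Ka_eq by simp
    qed
    ultimately show "\<exists>!b. b \<in> cArr B \<and> cDom B b = x \<and> Ja s b = c" using b by blast
  next
    show "inj_on (Jo s) (cObj B)"
    proof (rule inj_onI)
      fix x y assume "x \<in> cObj B" "y \<in> cObj B" "Jo s x = Jo s y"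
      then have "Ko S s x = Ko S s y" using hs(1) by metis
      then show "x = y" unfolding Ko_eq by simp
    qed
  qed
  have c1: "cosieve B C J1o J1a" using cos[of True] unfolding Jo_def Ja_def by simp
  have c2: "cosieve B C J2o J2a" using cos[of False] unfolding Jo_def Ja_def by simp
  have L: "lenses_eq A C (J1o \<circ> Fo) (J1a \<circ> Fa) (lens_comp_put Fo pF p1)
                     (J2o \<circ> Fo) (J2a \<circ> Fa) (lens_comp_put Fo pF p2)"
    if p1: "is_lens B C J1o J1a p1" and p2: "is_lens B C J2o J2a p2" for p1 p2
    unfolding lenses_eq_def
  proof (intro conjI ballI impI)
    show "functors_agree A (J1o \<circ> Fo) (J1a \<circ> Fa) (J2o \<circ> Fo) (J2a \<circ> Fa)" using agr .
  next
    fix x c assume x: "x \<in> cObj A" and c: "c \<in> cArr C" and dc: "cDom C c = (J1o \<circ> Fo) x"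
    have Fx: "Fo x \<in> cObj B" using functorD(3)[OF F x] .
    have dc1: "cDom C c = J1o (Fo x)" using dc by simp
    have dc2: "cDom C c = J2o (Fo x)" using dc agr x unfolding functors_agree_def by simp
    have q1: "p1 (Fo x) c \<in> cArr B" "J1a (p1 (Fo x) c) = c"
      using p1 Fx c dc1 unfolding is_lens_def by auto
    have q2: "p2 (Fo x) c \<in> cArr B" "J2a (p2 (Fo x) c) = c"
      using p2 Fx c dc2 unfolding is_lens_def by auto
    have "Ka B S True (p1 (Fo x) c) = Ha c" using hs(2)[OF q1(1), of True] q1(2) unfolding Ja_def by simp
    also have "\<dots> = Ka B S False (p2 (Fo x) c)" using hs(2)[OF q2(1), of False] q2(2) unfolding Ja_def by simp
    finally have "p1 (Fo x) c = p2 (Fo x) c" unfolding Ka_eq by simp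
    then show "lens_comp_put Fo pF p1 x c = lens_comp_put Fo pF p2 x c"
      unfolding lens_comp_put_def by simp
  qed
  show ?thesis using c1 c2 L by blast
qed

end
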